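(* Let $(R,+,0,\times,1,\leq)$ be a partially ordered unitary (nonassociative) ring. For $x \in R$ define $x^{\to 0} = 1$ and $x^{\to n+1} = x\, x^{\to n}$. Suppose that: (1) $1 \geq 0$; (2) $R$ is monotone $\sigma$-complete; (3) every $x \in\, ]0,1]$ has a right-sup-almost-inverse; (4) for every $x \in [0,1[$, $\inf_{n \in \mathbb{N}} x^{\to n}$ exists and equals $0$. Then: (a) for every $x \in [0,1[$, the supremum $\sum_{n\in\mathbb{N}} x^{\to n} := \sup_{n \in \mathbb{N}} \sum_{k=0}^n x^{\to k}$ exists; (b) for every $x \in [0,1[$, $x \sum_{n\in\mathbb{N}} x^{\to n} = \sup_{n\in\mathbb{N}} \sum_{k=0}^{n} x^{\to k+1}$ (and this supremum exists); (c) every $x \in\, ]0,1]$ admits a right inverse, namely $x_R^{-1} = \sum_{n \in \mathbb{N}} (1-x)^{\to n}$, i.e. $x\, x_R^{-1} = 1$; moreover $x_R^{-1} = 1 + a \geq 1$ where $a := \sup_{n}\sum_{k=0}^{n}(1-x)^{\to k+1} \geq 0$.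
   Context: Rings are not assumed associative or commutative: a ring is an abelian group $(R,+,0)$ with a biadditive multiplication; unitary means there is a two-sided multiplicative unit $1$. A partially ordered ring is a ring with a partial order $\leq$ such that $y \geq z \Rightarrow x+y \geq x+z$ and $x \geq 0, y \geq 0 \Rightarrow xy \geq 0$. Write $x < y$ for $x \le y$, $x \ne y$; $]0,1] = \{x : 0 < x \leq 1\}$, $[0,1[ = \{x : 0 \le x < 1\}$. A poset is monotone $\sigma$-complete if every increasing sequence that is bounded above has a supremum. An element $x > 0$ has a right-sup-almost-inverse if there is $y > 0$ with $xy \geq 1$. *)

theory Defs
  imports Main
begin

class po_nonassoc_ring_1 = ordered_ab_group_add + times + one +
  assumes nr_distrib_left: "a * (b + c) = a * b + a * c"
    and nr_distrib_right: "(a + b) * c = a * c + b * c"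
    and nr_mult_1_left: "1 * a = a"
    and nr_mult_1_right: "a * 1 = a"
    and nr_mult_nonneg: "0 \<le> a \<Longrightarrow> 0 \<le> b \<Longrightarrow> 0 \<le> a * b"

primrec rpow :: "'a::{times,one} \<Rightarrow> nat \<Rightarrow> 'a" where
  "rpow x 0 = 1"
| "rpow x (Suc n) = x * rpow x n"

definition is_sup :: "'a::order set \<Rightarrow> 'a \<Rightarrow> bool" where
  "is_sup S s \<longleftrightarrow> (\<forall>y\<in>S. y \<le> s) \<and> (\<forall>u. (\<forall>y\<in>S. y \<le> u) \<longrightarrow> s \<le> u)"

definition is_inf :: "'a::order set \<Rightarrow> 'a \<Rightarrow> bool" where
  "is_inf S s \<longleftrightarrow> (\<forall>y\<in>S. s \<le> y) \<and> (\<forall>u. (\<forall>y\<in>S. u \<le> y) \<longrightarrow> u \<le> s)"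

definition monotone_sigma_complete :: "'a::order itself \<Rightarrow> bool" where
  "monotone_sigma_complete _ \<longleftrightarrow>
     (\<forall>f::nat \<Rightarrow> 'a. mono f \<and> (\<exists>b. \<forall>n. f n \<le> b) \<longrightarrow> (\<exists>s. is_sup (range f) s))"

definition has_right_sup_almost_inverse :: "'a::{times,one,order,zero} \<Rightarrow> bool" where
  "has_right_sup_almost_inverse x \<longleftrightarrow> (\<exists>y. 0 < y \<and> 1 \<le> x * y)"

definition rseries :: "'a::{times,one,order,comm_monoid_add} \<Rightarrow> 'a" where
  "rseries x = (THE s. is_sup (range (\<lambda>n. \<Sum>k\<le>n. rpow x k)) s)"

end

theory Submission
  imports Defs
begin

context po_nonassoc_ring_1
begin

lemma nr_mult_zero_right: "a * 0 = 0"
  by (metis add.right_neutral add_left_cancel nr_distrib_left)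

lemma nr_right_diff: "a * (b - c) = a * b - a * c"
  by (metis diff_add_cancel eq_diff_eq nr_distrib_left)

lemma nr_left_diff: "(a - b) * c = a * c - b * c"
  by (metis diff_add_cancel eq_diff_eq nr_distrib_right)

lemma nr_mult_left_mono: "0 \<le> a \<Longrightarrow> b \<le> c \<Longrightarrow> a * b \<le> a * c"
proof -
  assume "0 \<le> a" "b \<le> c"
  then have "0 \<le> a * (c - b)" by (simp add: nr_mult_nonneg)
  then show ?thesis by (simp add: nr_right_diff)
qed

lemma nr_sum: "a * (\<Sum>k\<le>(n::nat). f k) = (\<Sum>k\<le>n. a * f k)"
  by (induction n) (simp_all add: nr_distrib_left)

end

lemma is_sup_unique: "is_sup S a \<Longrightarrow> is_sup S b \<Longrightarrow> a = b"
  unfolding is_sup_def by (meson order.antisym)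

lemma rseries_eq: "is_sup (range (\<lambda>n. \<Sum>k\<le>n. rpow x k)) s \<Longrightarrow> rseries x = s"
  unfolding rseries_def by (rule the_equality) (auto intro: is_sup_unique)

lemma core:
  fixes x :: "'a::po_nonassoc_ring_1"
  assumes h1: "(0::'a) \<le> 1"
    and h2: "monotone_sigma_complete TYPE('a)"
    and h3: "\<forall>x::'a. 0 < x \<and> x \<le> 1 \<longrightarrow> has_right_sup_almost_inverse x"
    and x0: "0 \<le> x" and x1: "x < 1"
  shows "is_sup (range (\<lambda>n. \<Sum>k\<le>n. rpow x k)) (rseries x)
       \<and> x * rseries x = rseries x - 1
       \<and> is_sup (range (\<lambda>n. \<Sum>k\<le>n. rpow x (Suc k))) (x * rseries x)"
proof -
  define s where "s = (\<lambda>n. \<Sum>k\<le>n. rpow x k)"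
  have sSuc: "s (Suc n) = 1 + x * s n" for n
    unfolding s_def by (simp only: sum.atMost_Suc_shift rpow.simps nr_sum)
  have s0: "s 0 = 1" unfolding s_def by simp
  have rnn: "0 \<le> rpow x n" for n
    by (induction n) (simp_all add: h1 x0 nr_mult_nonneg)
  have smono: "mono s"
    unfolding mono_iff_le_Suc s_def using rnn x0 by (simp add: nr_mult_nonneg)
  have "0 < 1 - x" using x0 x1 by (simp add: less_le)
  moreover have "1 - x \<le> 1" using x0 by simp
  ultimately obtain y where y: "0 < y" "1 \<le> (1 - x) * y"
    using h3 unfolding has_right_sup_almost_inverse_def by blast
  have y2: "1 + x * y \<le> y" using y(2) by (simp add: nr_left_diff nr_mult_1_left le_diff_eq add.commute)
  have xy: "0 \<le> x * y" using x0 y(1) by (simp add: nr_mult_nonneg)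
  have sy: "s n \<le> y" for n
  proof (induction n)
    case 0 then show ?case using y2 xy s0 by (metis add_increasing2 order.trans order.refl)
  next
    case (Suc n)
    have "x * s n \<le> x * y" using Suc x0 by (simp add: nr_mult_left_mono)
    then show ?case using sSuc y2 by (metis add_left_mono order.trans)
  qed
  obtain S where S: "is_sup (range s) S"
    using h2 smono sy unfolding monotone_sigma_complete_def by blast
  have rs: "rseries x = S" using S unfolding s_def by (rule rseries_eq)
  have sS: "s n \<le> S" for n using S unfolding is_sup_def by auto
  have Sle: "\<And>u. (\<forall>n. s n \<le> u) \<Longrightarrow> S \<le> u" using S unfolding is_sup_def by auto
  have Snn: "0 \<le> S" using sS[of 0] s0 h1 by simp
  have dle: "x * S - S + 1 \<le> S - s n" for n
  proof -
    have "0 \<le> (1 - x) * (S - s n)"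
      using x1 sS[of n] by (simp add: nr_mult_nonneg less_le)
    then have "s n - x * s n \<le> S - x * S"
      by (simp add: nr_left_diff nr_right_diff nr_mult_1_left)
    then have a: "x * S - x * s n \<le> S - s n"
      by (simp add: algebra_simps)
    have b: "x * s n \<le> S - 1" using sS[of "Suc n"] sSuc[of n] by (simp add: le_diff_eq add.commute)
    from add_mono[OF a b] show ?thesis by (simp add: algebra_simps)
  qed
  have "S \<le> S - (x * S - S + 1)"
    by (rule Sle) (use dle in \<open>auto simp: algebra_simps\<close>)
  then have up: "x * S \<le> S - 1" by (simp add: algebra_simps)
  have lo: "S - 1 \<le> x * S"
  proof -
    have "S \<le> x * S + 1"
    proof (rule Sle, intro allI)
      fix n
      show "s n \<le> x * S + 1"
      proof (cases n)
        case 0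
        have "0 \<le> x * S" using x0 Snn by (simp add: nr_mult_nonneg)
        then show ?thesis using 0 s0 by simp
      next
        case (Suc m)
        have "x * s m \<le> x * S" using x0 sS[of m] by (simp add: nr_mult_left_mono)
        then show ?thesis using Suc sSuc[of m] by (simp add: add.commute)
      qed
    qed
    then show ?thesis by (simp add: algebra_simps)
  qed
  have eq: "x * S = S - 1" using up lo by (rule order.antisym)
  have tdef: "(\<Sum>k\<le>n. rpow x (Suc k)) = x * s n" for n
    unfolding s_def by (simp add: nr_sum)
  have sup2: "is_sup (range (\<lambda>n. \<Sum>k\<le>n. rpow x (Suc k))) (x * S)"
    unfolding is_sup_def tdef
  proof (intro conjI ballI allI impI)
    fix z assume "z \<in> range (\<lambda>n. x * s n)"
    then show "z \<le> x * S" using x0 sS by (auto simp: nr_mult_left_mono)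
  next
    fix u assume H: "\<forall>z\<in>range (\<lambda>n. x * s n). z \<le> u"
    have "S \<le> u + 1"
    proof (rule Sle, intro allI)
      fix n
      show "s n \<le> u + 1"
      proof (cases n)
        case 0
        have "x * s 0 \<le> u" using H by auto
        then have "0 \<le> u" using s0 x0 by (simp add: nr_mult_1_right)
        then show ?thesis using 0 s0 by simp
      next
        case (Suc m)
        have "x * s m \<le> u" using H by auto
        then show ?thesis using Suc sSuc[of m] by (simp add: add.commute)
      qed
    qed
    then have "S - 1 \<le> u" by (simp add: diff_le_eq)
    then show "x * S \<le> u" by (simp only: eq)
  qed
  show ?thesis using S sup2 eq rs unfolding s_def by simp
qed

theorem mainTheorem11:
  fixes R :: "'a::po_nonassoc_ring_1 itself"
  assumes h1: "(0::'a) \<le> 1"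
    and h2: "monotone_sigma_complete TYPE('a)"
    and h3: "\<forall>x::'a. 0 < x \<and> x \<le> 1 \<longrightarrow> has_right_sup_almost_inverse x"
    and h4: "\<forall>x::'a. 0 \<le> x \<and> x < 1 \<longrightarrow> is_inf (range (rpow x)) 0"
  shows "(\<forall>x::'a. 0 \<le> x \<and> x < 1 \<longrightarrow>
            (\<exists>s. is_sup (range (\<lambda>n. \<Sum>k\<le>n. rpow x k)) s))
       \<and> (\<forall>x::'a. 0 \<le> x \<and> x < 1 \<longrightarrow>
            is_sup (range (\<lambda>n. \<Sum>k\<le>n. rpow x (Suc k))) (x * rseries x))
       \<and> (\<forall>x::'a. 0 < x \<and> x \<le> 1 \<longrightarrow>
            is_sup (range (\<lambda>n. \<Sum>k\<le>n. rpow (1 - x) k)) (rseries (1 - x))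
          \<and> x * rseries (1 - x) = 1
          \<and> (\<exists>a. is_sup (range (\<lambda>n. \<Sum>k\<le>n. rpow (1 - x) (Suc k))) a
                 \<and> 0 \<le> a \<and> rseries (1 - x) = 1 + a)
          \<and> 1 \<le> rseries (1 - x))"
proof (intro conjI allI impI)
  fix x :: 'a assume "0 \<le> x \<and> x < 1"
  then show "\<exists>s. is_sup (range (\<lambda>n. \<Sum>k\<le>n. rpow x k)) s"
    using core[OF h1 h2 h3] by blast
next
  fix x :: 'a assume "0 \<le> x \<and> x < 1"
  then show "is_sup (range (\<lambda>n. \<Sum>k\<le>n. rpow x (Suc k))) (x * rseries x)"
    using core[OF h1 h2 h3] by blast
next
  fix x :: 'a assume hx: "0 < x \<and> x \<le> 1"
  have u0: "0 \<le> 1 - x" using hx by simp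
  have u1: "1 - x < 1" using hx by simp
  note C = core[OF h1 h2 h3 u0 u1]
  define S where "S = rseries (1 - x)"
  have eq: "(1 - x) * S = S - 1" using C S_def by simp
  have sup1: "is_sup (range (\<lambda>n. \<Sum>k\<le>n. rpow (1 - x) k)) S" using C S_def by simp
  have S1: "1 \<le> S" using sup1 unfolding is_sup_def
    by (metis (no_types, lifting) atMost_0 empty_iff finite.emptyI rangeI rpow.simps(1) sum.insert sum.empty add.right_neutral insert_iff)
  have Snn: "0 \<le> S" using S1 h1 by simp
  show "is_sup (range (\<lambda>n. \<Sum>k\<le>n. rpow (1 - x) k)) (rseries (1 - x))"
    using sup1 S_def by simp
  show "x * rseries (1 - x) = 1"
  proof -
    have "(1 - x) * S = S - x * S" by (simp add: nr_left_diff nr_mult_1_left)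
    then show ?thesis using eq S_def by (metis add_diff_cancel_right' diff_add_cancel add_right_cancel add.commute diff_diff_eq2)
  qed
  show "\<exists>a. is_sup (range (\<lambda>n. \<Sum>k\<le>n. rpow (1 - x) (Suc k))) a
                 \<and> 0 \<le> a \<and> rseries (1 - x) = 1 + a"
  proof (intro exI conjI)
    show "is_sup (range (\<lambda>n. \<Sum>k\<le>n. rpow (1 - x) (Suc k))) ((1 - x) * S)"
      using C unfolding S_def by blast
    show "0 \<le> (1 - x) * S" using u0 Snn by (simp add: nr_mult_nonneg)
    show "rseries (1 - x) = 1 + (1 - x) * S" using eq S_def by simp
  qed
  show "1 \<le> rseries (1 - x)" using S1 S_def by simp
qed

end
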